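(* Let $K\subset\mathbb{R}^2$ be a convex body of area $1$ and let $R$ be a rectangle inscribed in $K$ with area $r\le 1/2$. Then at least one of the four caps of $R$ in $K$ has area at least $\frac14\big(\sqrt{1-2r}+1-r\big)$.
   Context: A convex body is a compact convex set with nonempty interior. A parallelogram (in particular a rectangle) $P$ is inscribed in $K$ if its four vertices lie on $\partial K$. In that case $\mathrm{int}(K)\setminus P$ has four connected components (one beyond each side of $P$), and their closures are called the caps of $P$ in $K$. *)

theory Defs
  imports "HOL-Analysis.Analysis"
begin

definition convex_body :: "(real^2) set \<Rightarrow> bool" where
  "convex_body K \<longleftrightarrow> compact K \<and> convex K \<and> interior K \<noteq> {}"

definition is_rectangle :: "real^2 \<Rightarrow> real^2 \<Rightarrow> real^2 \<Rightarrow> real^2 \<Rightarrow> bool" where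
  "is_rectangle a b c d \<longleftrightarrow> a \<noteq> b \<and> a \<noteq> d \<and> (b - a) \<bullet> (d - a) = 0 \<and> c = b + d - a"

definition rectangle_inscribed ::
  "(real^2) set \<Rightarrow> real^2 \<Rightarrow> real^2 \<Rightarrow> real^2 \<Rightarrow> real^2 \<Rightarrow> bool" where
  "rectangle_inscribed K a b c d \<longleftrightarrow> is_rectangle a b c d \<and>
     a \<in> frontier K \<and> b \<in> frontier K \<and> c \<in> frontier K \<and> d \<in> frontier K"

definition caps :: "(real^2) set \<Rightarrow> (real^2) set \<Rightarrow> (real^2) set set" where
  "caps K P = closure ` components (interior K - P)"

end

theory Submission
  imports Defs "HOL-Analysis.Simplex_Content"
begin



lemma root_bound:
  fixes S T r :: real
  assumes "T \<le> S" "0 \<le> T" "1 - r \<le> S + T" "S * T \<le> r^2/4" "r \<le> 1/2"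
  shows "((1 - r) + sqrt (1 - 2 * r)) / 2 \<le> S"
proof -
  have S0: "(1 - r)/2 \<le> S" using assms(1,3) by (simp add: field_simps)
  have "S * (1 - r - S) \<le> S * T"
    using assms S0 by (intro mult_left_mono) auto
  hence "S * (1 - r - S) \<le> r^2/4" using assms by linarith
  hence "(1 - 2 * r)/4 \<le> (S - (1-r)/2)^2" by (simp add: power2_eq_square field_simps)
  hence "sqrt ((1 - 2 * r)/4) \<le> sqrt ((S - (1-r)/2)^2)" by (rule real_sqrt_le_mono)
  also have "\<dots> = S - (1-r)/2" using S0 by simp
  also have "sqrt ((1 - 2 * r)/4) = sqrt (1 - 2 * r) / 2" by (simp add: real_sqrt_divide)
  finally have h: "sqrt (1 - 2 * r) / 2 \<le> S - (1-r)/2" .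
  have "((1 - r) + sqrt (1 - 2 * r)) / 2 = (1-r)/2 + sqrt (1 - 2 * r) / 2" by (simp add: field_simps)
  with h show ?thesis by linarith
qed

lemma final_alg:
  fixes r m1 m2 m3 m4 :: real
  assumes "0 \<le> m1" "0 \<le> m2" "0 \<le> m3" "0 \<le> m4" "r \<le> 1/2"
    "1 - r \<le> m1 + m2 + m3 + m4" "(m1 + m3) * (m2 + m4) \<le> r^2/4"
  shows "(sqrt (1 - 2 * r) + 1 - r) / 4 \<le> max (max m1 m3) (max m2 m4)"
proof (cases "m2 + m4 \<le> m1 + m3")
  case True
  have "((1 - r) + sqrt (1 - 2 * r)) / 2 \<le> m1 + m3"
    by (rule root_bound) (use assms True in auto)
  thus ?thesis by (simp add: max_def)
next
  case False
  have "((1 - r) + sqrt (1 - 2 * r)) / 2 \<le> m2 + m4"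
    by (rule root_bound[where T="m1+m3"]) (use assms False in \<open>auto simp: mult.commute\<close>)
  thus ?thesis by (simp add: max_def)
qed



lemma helper1:
  fixes x y p q u v m :: real
  assumes "0<x" "0<y" "0\<le>m" "0\<le>p" "0\<le>q" "x * p \<le> u" "y * q \<le> v" "(x * v + u * y)*m \<le> x * y"
  shows "m*(p+q) \<le> 1"
proof -
  have "x * y*(m*(p+q)) = m*(y*(x * p) + x*(y * q))" by (simp add: algebra_simps)
  also have "\<dots> \<le> m*(y * u + x * v)"
    using assms by (intro mult_left_mono add_mono) auto
  also have "\<dots> \<le> x * y" using assms(8) by (simp add: algebra_simps)
  finally have "x * y*(m*(p+q)) \<le> x * y * 1" by simp
  moreover have "0 < x * y" using assms by simp
  ultimately show ?thesis by (simp only: mult_le_cancel_left_pos)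
qed

lemma helper2:
  fixes w x z m u :: real
  assumes "0<w" "(w * x + z)*m \<le> w * u" "0\<le>z * m"
  shows "x * m \<le> u"
proof -
  have "w*(x * m) \<le> (w * x + z)*m" using assms(3) by (simp add: algebra_simps)
  hence "w*(x * m) \<le> w * u" using assms(2) by linarith
  thus ?thesis using assms(1) by simp
qed

lemma helper3:
  fixes D h m :: real
  assumes "0 < D" "D * m \<le> h"
  shows "m \<le> h/D"
  using assms by (simp add: field_simps mult.commute)

lemma prod_alg:
  fixes a1 b1 a2 b2 a3 b3 a4 b4 m1 m2 m3 m4 :: real
  assumes nn: "0\<le>a1" "0\<le>b1" "0\<le>a2" "0\<le>b2" "0\<le>a3" "0\<le>b3" "0\<le>a4" "0\<le>b4"
    and mn: "0\<le>m1" "0\<le>m2" "0\<le>m3" "0\<le>m4"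
    and c1: "(a1 * b2 + b1 * a2)*m1 \<le> a1 * a2"
    and c2: "(b2 * a3 + a2 * b3)*m2 \<le> b2 * b3"
    and c3: "(a3 * b4 + b3 * a4)*m3 \<le> a3 * a4"
    and c4: "(b4 * a1 + a4 * b1)*m4 \<le> b4 * b1"
    and k1: "a1 = 0 \<Longrightarrow> m1 = 0" and k2: "a2 = 0 \<Longrightarrow> m1 = 0"
    and k3: "a3 = 0 \<Longrightarrow> m3 = 0" and k4: "a4 = 0 \<Longrightarrow> m3 = 0"
    and k5: "b2 = 0 \<Longrightarrow> m2 = 0" and k6: "b3 = 0 \<Longrightarrow> m2 = 0"
    and k7: "b4 = 0 \<Longrightarrow> m4 = 0" and k8: "b1 = 0 \<Longrightarrow> m4 = 0"
  shows "(m1+m3)*(m2+m4) \<le> 1"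
proof (cases "m1 = 0 \<or> m2 = 0 \<or> m3 = 0 \<or> m4 = 0")
  case True
  then consider "m1 = 0" | "m2 = 0" | "m3 = 0" | "m4 = 0" by blast
  then show ?thesis
  proof cases
    case 1
    show ?thesis
    proof (cases "m3 = 0")
      case True thus ?thesis using 1 by simp
    next
      case False
      hence p3: "0 < a3" "0 < a4" using k3 k4 nn by force+
      have i2: "a3 * m2 \<le> b3"
      proof (cases "b2 = 0")
        case True thus ?thesis using k5 nn by simp
      next
        case False
        thus ?thesis using nn mn c2 by (intro helper2[of b2 a3 "a2 * b3" m2 b3]) auto
      qed
      have i4: "a4 * m4 \<le> b4"
      proof (cases "b1 = 0")
        case True thus ?thesis using k8 nn by simp
      next
        case False
        thus ?thesis using nn mn c4 by (intro helper2[of b1 a4 "b4 * a1" m4 b4]) (auto simp: algebra_simps)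
      qed
      have "m3*(m2+m4) \<le> 1"
        using p3 mn i2 i4 c3 by (intro helper1[of a3 a4 m3 m2 m4 b3 b4]) (auto simp: algebra_simps)
      thus ?thesis using 1 by simp
    qed
  next
    case 3
    show ?thesis
    proof (cases "m1 = 0")
      case True thus ?thesis using 3 by simp
    next
      case False
      hence p1: "0 < a1" "0 < a2" using k1 k2 nn by force+
      have i2: "a2 * m2 \<le> b2"
      proof (cases "b3 = 0")
        case True thus ?thesis using k6 nn by simp
      next
        case False
        thus ?thesis using nn mn c2 by (intro helper2[of b3 a2 "b2 * a3" m2 b2]) (auto simp: algebra_simps)
      qed
      have i4: "a1 * m4 \<le> b1"
      proof (cases "b4 = 0")
        case True thus ?thesis using k7 nn by simp
      next
        case False
        thus ?thesis using nn mn c4 by (intro helper2[of b4 a1 "a4 * b1" m4 b1]) (auto simp: algebra_simps)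
      qed
      have "m1*(m2+m4) \<le> 1"
        using p1 mn i2 i4 c1 by (intro helper1[of a2 a1 m1 m2 m4 b2 b1]) (auto simp: algebra_simps)
      thus ?thesis using 3 by simp
    qed
  next
    case 2
    show ?thesis
    proof (cases "m4 = 0")
      case True thus ?thesis using 2 by simp
    next
      case False
      hence p4: "0 < b4" "0 < b1" using k7 k8 nn by force+
      have i1: "b1 * m1 \<le> a1"
      proof (cases "a2 = 0")
        case True thus ?thesis using k2 nn by simp
      next
        case False
        thus ?thesis using nn mn c1 by (intro helper2[of a2 b1 "a1 * b2" m1 a1]) (auto simp: algebra_simps)
      qed
      have i3: "b4 * m3 \<le> a4"
      proof (cases "a3 = 0")
        case True thus ?thesis using k3 nn by simp
      next
        case False
        thus ?thesis using nn mn c3 by (intro helper2[of a3 b4 "b3 * a4" m3 a4]) (auto simp: algebra_simps)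
      qed
      have "m4*(m1+m3) \<le> 1"
        using p4 mn i1 i3 c4 by (intro helper1[of b1 b4 m4 m1 m3 a1 a4]) (auto simp: algebra_simps)
      thus ?thesis using 2 by (simp add: algebra_simps)
    qed
  next
    case 4
    show ?thesis
    proof (cases "m2 = 0")
      case True thus ?thesis using 4 by simp
    next
      case False
      hence p2: "0 < b2" "0 < b3" using k5 k6 nn by force+
      have i1: "b2 * m1 \<le> a2"
      proof (cases "a1 = 0")
        case True thus ?thesis using k1 nn by simp
      next
        case False
        thus ?thesis using nn mn c1 by (intro helper2[of a1 b2 "b1 * a2" m1 a2]) (auto simp: algebra_simps)
      qed
      have i3: "b3 * m3 \<le> a3"
      proof (cases "a4 = 0")
        case True thus ?thesis using k4 nn by simp
      next
        case False
        thus ?thesis using nn mn c3 by (intro helper2[of a4 b3 "a3 * b4" m3 a3]) (auto simp: algebra_simps)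
      qed
      have "m2*(m1+m3) \<le> 1"
        using p2 mn i1 i3 c2 by (intro helper1[of b2 b3 m2 m1 m3 a2 a3]) (auto simp: algebra_simps)
      thus ?thesis using 4 by (simp add: algebra_simps)
    qed
  qed
next
  case False
  hence pos: "0<a1" "0<a2" "0<a3" "0<a4" "0<b1" "0<b2" "0<b3" "0<b4"
    using k1 k2 k3 k4 k5 k6 k7 k8 nn by (auto simp: less_le)
  define D1 where "D1 = a1 * b2 + b1 * a2"
  define D2 where "D2 = b2 * a3 + a2 * b3"
  define D3 where "D3 = a3 * b4 + b3 * a4"
  define D4 where "D4 = b4 * a1 + a4 * b1"
  have Dp: "0<D1" "0<D2" "0<D3" "0<D4" using pos by (simp_all add: D1_def D2_def D3_def D4_def add_pos_pos)
  have h1: "m1 \<le> a1 * a2/D1" using Dp c1 by (intro helper3) (auto simp: D1_def)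
  have h2: "m2 \<le> b2 * b3/D2" using Dp c2 by (intro helper3) (auto simp: D2_def)
  have h3: "m3 \<le> a3 * a4/D3" using Dp c3 by (intro helper3) (auto simp: D3_def)
  have h4: "m4 \<le> b4 * b1/D4" using Dp c4 by (intro helper3) (auto simp: D4_def)
  have "(m1+m3)*(m2+m4) \<le> (a1 * a2/D1 + a3 * a4/D3)*(b2 * b3/D2 + b4 * b1/D4)"
    using h1 h2 h3 h4 mn by (intro mult_mono add_mono) auto
  also have "\<dots> = ((a1 * a2 * D3 + a3 * a4 * D1)*(b2 * b3 * D4 + b4 * b1 * D2)) / (D1 * D2 * D3 * D4)"
    using Dp by (simp add: field_simps)
  also have "\<dots> \<le> 1"
  proof -
    have "D1 * D2 * D3 * D4 - (a1 * a2 * D3 + a3 * a4 * D1)*(b2 * b3 * D4 + b4 * b1 * D2)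
          = (a1 * b2 * a3 * b4 - b1 * a2 * b3 * a4)^2"
      by (simp add: D1_def D2_def D3_def D4_def power2_eq_square algebra_simps)
    hence "(a1 * a2 * D3 + a3 * a4 * D1)*(b2 * b3 * D4 + b4 * b1 * D2) \<le> D1 * D2 * D3 * D4"
      by (metis diff_ge_0_iff_ge zero_le_power2)
    moreover have "0 < D1 * D2 * D3 * D4" using Dp by simp
    ultimately show ?thesis by simp
  qed
  finally show ?thesis .
qed



definition cr :: "real^2 \<Rightarrow> real^2 \<Rightarrow> real" where
  "cr u v = u$1 * v$2 - u$2 * v$1"

lemma cap_empty1:
  fixes K S :: "(real^2) set" and p u v :: "real^2"
  assumes "0 \<le> bb1" "0 < aa1 + bb1" "aa1 = 0"
    and cons: "\<And>s t. p + s *\<^sub>R u + t *\<^sub>R v \<in> K \<Longrightarrow> 0 \<le> aa1* s + bb1*t"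
    and SK: "S \<subseteq> K"
    and rep: "\<And>x. x \<in> S \<Longrightarrow> \<exists>s t. x = p + s *\<^sub>R u + t *\<^sub>R v \<and> t < 0"
  shows "S = {}"
proof (rule ccontr)
  assume "S \<noteq> {}"
  then obtain x where "x \<in> S" by blast
  then obtain s t where x: "x = p + s *\<^sub>R u + t *\<^sub>R v" "t < 0" using rep by blast
  have "0 \<le> aa1* s + bb1*t" using cons \<open>x \<in> S\<close> SK x by blast
  moreover have "bb1 > 0" using assms by simp
  ultimately show False using x assms(3) mult_pos_neg[of _ t] by (simp add: not_le[symmetric])
qed

lemma cap_empty2:
  fixes K S :: "(real^2) set" and p u v :: "real^2"
  assumes "0 \<le> bb2" "0 < aa2 + bb2" "aa2 = 0"
    and cons: "\<And>s t. p + s *\<^sub>R u + t *\<^sub>R v \<in> K \<Longrightarrow> 0 \<le> aa2*(1-s) + bb2*t"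
    and SK: "S \<subseteq> K"
    and rep: "\<And>x. x \<in> S \<Longrightarrow> \<exists>s t. x = p + s *\<^sub>R u + t *\<^sub>R v \<and> t < 0"
  shows "S = {}"
proof (rule ccontr)
  assume "S \<noteq> {}"
  then obtain x where "x \<in> S" by blast
  then obtain s t where x: "x = p + s *\<^sub>R u + t *\<^sub>R v" "t < 0" using rep by blast
  have "0 \<le> aa2*(1-s) + bb2*t" using cons \<open>x \<in> S\<close> SK x by blast
  moreover have "bb2 > 0" using assms by simp
  ultimately show False using x assms(3) mult_pos_neg[of _ t] by (simp add: not_le[symmetric])
qed

lemma triangle_measure:
  fixes p u v :: "real^2"
  shows "measure lebesgue (convex hull {p, p + u, p + s *\<^sub>R u + t *\<^sub>R v}) = \<bar>t\<bar> * \<bar>cr u v\<bar> / 2"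
proof -
  have "measure lebesgue (convex hull {p, p + u, p + s *\<^sub>R u + t *\<^sub>R v})
      = measure lborel (convex hull {p, p + u, p + s *\<^sub>R u + t *\<^sub>R v})"
    using finite_imp_compact_convex_hull[of "{p, p + u, p + s *\<^sub>R u + t *\<^sub>R v}"]
    by (intro measure_completion) (auto dest: compact_imp_closed)
  also have "\<dots> = \<bar>t\<bar> * \<bar>cr u v\<bar> / 2"
    by (subst content_triangle) (simp add: cr_def algebra_simps abs_mult[symmetric])
  finally show ?thesis .
qed

lemma cap_bound:
  fixes K S :: "(real^2) set" and p u v :: "real^2"
  assumes nn: "0 \<le> aa1" "0 \<le> bb1" "0 \<le> aa2" "0 \<le> bb2" "0 < aa1 + bb1" "0 < aa2 + bb2"
    and cons: "\<And>s t. p + s *\<^sub>R u + t *\<^sub>R v \<in> K \<Longrightarrow> 0 \<le> aa1* s + bb1*t \<and> 0 \<le> aa2*(1-s) + bb2*t"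
    and SK: "S \<subseteq> K" and Sm: "S \<in> sets lebesgue"
    and rep: "\<And>x. x \<in> S \<Longrightarrow> \<exists>s t. x = p + s *\<^sub>R u + t *\<^sub>R v \<and> t < 0"
  shows "(aa1*bb2 + bb1*aa2) * measure lebesgue S \<le> \<bar>cr u v\<bar> * (aa1*aa2) / 2"
proof (cases "aa1 = 0 \<or> aa2 = 0")
  case True
  have "S = {}"
  proof (cases "aa1 = 0")
    case True thus ?thesis using cap_empty1[OF nn(2,5) True _ SK rep] cons by blast
  next
    case False
    hence "aa2 = 0" using \<open>aa1 = 0 \<or> aa2 = 0\<close> by simp
    thus ?thesis using cap_empty2[OF nn(4,6) _ _ SK rep] cons by blast
  qed
  thus ?thesis using nn by simp
next
  case False
  hence a1: "0 < aa1" and a2: "0 < aa2" using nn by auto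
  define D where "D = aa1*bb2 + bb1*aa2"
  show ?thesis
  proof (cases "D = 0")
    case True
    thus ?thesis using nn unfolding D_def by simp
  next
    case False
  have "0 \<le> D" unfolding D_def using nn by simp
  hence Dp: "0 < D" using False by simp
  define ts where "ts = - (aa1*aa2) / D"
  define ss where "ss = bb1*aa2 / D"
  define q where "q = p + ss *\<^sub>R u + ts *\<^sub>R v"
  have sub: "S \<subseteq> convex hull {p, p + u, q}"
  proof
    fix x assume "x \<in> S"
    then obtain s t where x: "x = p + s *\<^sub>R u + t *\<^sub>R v" "t < 0" using rep by blast
    have c: "0 \<le> aa1* s + bb1*t" "0 \<le> aa2*(1-s) + bb2*t" using cons \<open>x \<in> S\<close> SK x by blast+
    define l3 where "l3 = - t * D / (aa1*aa2)"
    define l2 where "l2 = s + t*bb1/aa1"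
    define l1 where "l1 = 1 - s + t*bb2/aa2"
    have l3: "0 \<le> l3" unfolding l3_def using x(2) Dp a1 a2
      by (intro divide_nonneg_pos mult_nonneg_nonneg) auto
    have l2: "0 \<le> l2" unfolding l2_def using c(1) a1 by (simp add: field_simps)
    have l1: "0 \<le> l1" unfolding l1_def using c(2) a2 by (simp add: field_simps)
    have e1: "l1 + l2 + l3 = 1" unfolding l1_def l2_def l3_def D_def using a1 a2
      by (simp add: field_simps)
    have e2: "l2 + l3 * ss = s" unfolding l2_def l3_def ss_def using a1 a2 Dp
      by (simp add: field_simps)
    have e3: "l3 * ts = t" unfolding l3_def ts_def using a1 a2 Dp
      by (simp add: field_simps)
    have "l1 *\<^sub>R p + l2 *\<^sub>R (p + u) + l3 *\<^sub>R q
        = (l1 + l2 + l3) *\<^sub>R p + (l2 + l3 * ss) *\<^sub>R u + (l3 * ts) *\<^sub>R v"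
      unfolding q_def by (simp add: algebra_simps)
    also have "\<dots> = x" using e1 e2 e3 x by simp
    finally have "x = l1 *\<^sub>R p + l2 *\<^sub>R (p + u) + l3 *\<^sub>R q" by simp
    thus "x \<in> convex hull {p, p + u, q}"
      unfolding convex_hull_3 using l1 l2 l3 e1 by blast
  qed
  have "measure lebesgue S \<le> measure lebesgue (convex hull {p, p + u, q})"
    using finite_imp_compact_convex_hull[of "{p, p + u, q}"]
    by (intro measure_mono_fmeasurable[OF sub Sm]) (auto intro: lmeasurable_compact)
  also have "\<dots> = \<bar>ts\<bar> * \<bar>cr u v\<bar> / 2" unfolding q_def by (rule triangle_measure)
  also have "\<bar>ts\<bar> = aa1*aa2 / D" unfolding ts_def using a1 a2 Dp by simp
  finally have "measure lebesgue S \<le> aa1*aa2 / D * \<bar>cr u v\<bar> / 2" .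
  hence "D * measure lebesgue S \<le> D * (aa1*aa2 / D * \<bar>cr u v\<bar> / 2)"
    using Dp by (intro mult_left_mono) auto
  also have "\<dots> = \<bar>cr u v\<bar> * (aa1*aa2) / 2" using Dp by simp
  finally show ?thesis unfolding D_def .
  qed
qed





definition cS :: "real^2 \<Rightarrow> real^2 \<Rightarrow> real^2" where
  "cS e f = (1 / cr e f) *\<^sub>R (\<chi> i. if i = 1 then f$2 else - f$1)"
definition cT :: "real^2 \<Rightarrow> real^2 \<Rightarrow> real^2" where
  "cT e f = (1 / cr e f) *\<^sub>R (\<chi> i. if i = 1 then - e$2 else e$1)"

lemma inner2: "inner (x::real^2) y = x$1 * y$1 + x$2 * y$2"
  by (simp add: inner_vec_def sum_2)

lemma inner_cS: "inner (cS e f) y = cr y f / cr e f"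
  by (simp add: cS_def inner2 cr_def algebra_simps diff_divide_distrib)

lemma inner_cT: "inner (cT e f) y = cr e y / cr e f"
  by (simp add: cT_def inner2 cr_def algebra_simps diff_divide_distrib)

lemma cr_lin1: "cr (s *\<^sub>R e + t *\<^sub>R f) f = s * cr e f"
  by (simp add: cr_def algebra_simps)

lemma cr_lin2: "cr e (s *\<^sub>R e + t *\<^sub>R f) = t * cr e f"
  by (simp add: cr_def algebra_simps)

lemma decomp0: "cr e f *\<^sub>R y = cr y f *\<^sub>R e + cr e y *\<^sub>R f"
  unfolding vec_eq_iff forall_2 by (simp add: cr_def algebra_simps)

lemma coord_decomp:
  assumes "cr e f \<noteq> 0"
  shows "y = inner (cS e f) y *\<^sub>R e + inner (cT e f) y *\<^sub>R f"
proof -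
  have "y = (1 / cr e f) *\<^sub>R (cr e f *\<^sub>R y)" using assms by simp
  also have "cr e f *\<^sub>R y = cr y f *\<^sub>R e + cr e y *\<^sub>R f" by (rule decomp0)
  finally have "y = (1 / cr e f) *\<^sub>R (cr y f *\<^sub>R e + cr e y *\<^sub>R f)" .
  thus ?thesis by (simp add: inner_cS inner_cT scaleR_add_right)
qed

lemma coord_S:
  assumes "cr e f \<noteq> 0"
  shows "inner (cS e f) (s *\<^sub>R e + t *\<^sub>R f) = s"
  using assms by (simp add: inner_cS cr_lin1)

lemma coord_T:
  assumes "cr e f \<noteq> 0"
  shows "inner (cT e f) (s *\<^sub>R e + t *\<^sub>R f) = t"
  using assms by (simp add: inner_cT cr_lin2)

lemma cr_ne0:
  assumes "e \<noteq> 0" "f \<noteq> 0" "inner e f = 0"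
  shows "cr e f \<noteq> 0"
proof
  assume h: "cr e f = 0"
  have "(cr e f)^2 + (inner e f)^2 = (inner e e)*(inner f f)"
    by (simp add: cr_def inner2 power2_eq_square algebra_simps)
  hence "inner e e * inner f f = 0" using h assms(3) by simp
  thus False using assms(1,2) by simp
qed

lemma nonzero_pair:
  assumes "n \<noteq> 0" "cr e f \<noteq> 0" "inner n e = 0" "inner n f = 0"
  shows False
proof -
  have h1: "n$1*e$1 + n$2*e$2 = 0" "n$1*f$1 + n$2*f$2 = 0" using assms(3,4) by (simp_all add: inner2 mult.commute)
  have "n$1 * cr e f = 0" using h1 unfolding cr_def by algebra
  hence "n$1 = 0" using assms(2) by simp
  moreover have "n$2 * cr e f = 0" using h1 unfolding cr_def by algebra
  hence "n$2 = 0" using assms(2) by simp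
  ultimately have "n = 0" unfolding vec_eq_iff forall_2 by simp
  thus False using assms(1) by simp
qed

lemma support_pt:
  fixes K :: "(real^2) set"
  assumes "convex K" "closed K" "interior K \<noteq> {}" "w \<in> frontier K"
  obtains n where "n \<noteq> 0" "\<And>y. y \<in> K \<Longrightarrow> inner n w \<le> inner n y"
proof -
  have w: "w \<in> closure K" "w \<notin> interior K"
    using assms(4) unfolding frontier_def by blast+
  have "w \<in> closure K" "w \<notin> rel_interior K"
    using w rel_interior_nonempty_interior[OF assms(3)] by simp_all
  then obtain n where n1: "n \<noteq> 0" and n2: "\<And>y. y \<in> closure K \<Longrightarrow> inner n w \<le> inner n y"
    and "\<And>y. y \<in> rel_interior K \<Longrightarrow> inner n w < inner n y"
    by (rule supporting_hyperplane_relative_frontier[OF assms(1)]) blast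
  show ?thesis
  proof (rule that[OF n1])
    fix y assume "y \<in> K"
    hence "y \<in> closure K" using closure_subset by blast
    thus "inner n w \<le> inner n y" by (rule n2)
  qed
qed

lemma cap_from_region:
  fixes K P R :: "(real^2) set"
  assumes "compact K" "R \<subseteq> interior K - P" "convex R" "R \<noteq> {}" "R \<in> sets lebesgue"
  shows "\<exists>C \<in> closure ` components (interior K - P). measure lebesgue R \<le> measure lebesgue C"
proof -
  obtain Cc where Cc: "Cc \<in> components (interior K - P)" "R \<subseteq> Cc"
    using exists_component_superset[OF assms(2) _ convex_connected[OF assms(3)]] assms(2,4) by blast
  have "Cc \<subseteq> K" using in_components_subset[OF Cc(1)] interior_subset by blast
  hence "closure Cc \<subseteq> K" using assms(1) by (simp add: closure_minimal compact_imp_closed)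
  hence "bounded (closure Cc)" using compact_imp_bounded[OF assms(1)] bounded_subset by blast
  hence "compact (closure Cc)" by (simp add: compact_eq_bounded_closed)
  moreover have "R \<subseteq> closure Cc" using Cc(2) closure_subset by blast
  ultimately have "measure lebesgue R \<le> measure lebesgue (closure Cc)"
    using measure_mono_fmeasurable[OF _ assms(5) lmeasurable_compact] by blast
  thus ?thesis using Cc(1) by blast
qed

lemma linL: "linear (\<lambda>x::real^2. x$1 *\<^sub>R e + x$2 *\<^sub>R f)"
  by (auto simp: linear_iff algebra_simps)

lemma detL: "det (matrix (\<lambda>x::real^2. x$1 *\<^sub>R e + x$2 *\<^sub>R f)) = cr e f"
  by (simp add: det_2 matrix_def axis_def cr_def)

lemma unit_sq: "measure lebesgue (cbox (0::real^2) 1) = 1"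
proof -
  have "0 \<in> cbox (0::real^2) 1" by (simp add: mem_box_cart)
  hence ne: "cbox (0::real^2) 1 \<noteq> {}" by blast
  have "measure lebesgue (cbox (0::real^2) 1) = measure lborel (cbox (0::real^2) 1)"
    by (intro measure_completion) auto
  also have "\<dots> = 1" by (subst content_cbox_cart[OF ne]) simp
  finally show ?thesis .
qed




theorem lemma3p5:
  fixes K :: "(real^2) set" and a b c d :: "real^2" and r :: real
  assumes "convex_body K"
    and "measure lebesgue K = 1"
    and "rectangle_inscribed K a b c d"
    and "r = measure lebesgue (convex hull {a, b, c, d})"
    and "r \<le> 1/2"
  shows "\<exists>C \<in> caps K (convex hull {a, b, c, d}).
           measure lebesgue C \<ge> (sqrt (1 - 2 * r) + 1 - r) / 4"
proof -
  from assms(1) have Kc: "compact K" and Kcv: "convex K" and Ki: "interior K \<noteq> {}"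
    by (auto simp: convex_body_def)
  have Kcl: "closed K" using Kc by (rule compact_imp_closed)
  from assms(3) have ab: "a \<noteq> b" and ad: "a \<noteq> d" and orth: "inner (b - a) (d - a) = 0"
    and cdef: "c = b + d - a" and fr: "a \<in> frontier K" "b \<in> frontier K" "c \<in> frontier K" "d \<in> frontier K"
    by (auto simp: rectangle_inscribed_def is_rectangle_def)
  define e where "e = b - a"
  define f where "f = d - a"
  have bE: "b = a + e" and dE: "d = a + f" and cE: "c = a + e + f"
    using cdef by (auto simp: e_def f_def algebra_simps)
  have kne: "cr e f \<noteq> 0"
    using ab ad orth by (intro cr_ne0) (auto simp: e_def f_def)
  define k where "k = cr e f"
  define P where "P = convex hull {a, b, c, d}"
  define ss where "ss = (\<lambda>x. inner (cS e f) (x - a))"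
  define tt where "tt = (\<lambda>x. inner (cT e f) (x - a))"
  have decomp: "x = a + ss x *\<^sub>R e + tt x *\<^sub>R f" for x
  proof -
    have "x - a = ss x *\<^sub>R e + tt x *\<^sub>R f" unfolding ss_def tt_def by (rule coord_decomp[OF kne])
    thus ?thesis by (simp add: algebra_simps)
  qed
  have coordS: "ss (a + s *\<^sub>R e + t *\<^sub>R f) = s" for s t
    unfolding ss_def using coord_S[OF kne] by (simp add: add.assoc)
  have coordT: "tt (a + s *\<^sub>R e + t *\<^sub>R f) = t" for s t
    unfolding tt_def using coord_T[OF kne] by (simp add: add.assoc)
  have frK: "frontier K \<subseteq> K" using Kcl by (simp add: frontier_subset_closed)
  have inK: "a \<in> K" "b \<in> K" "c \<in> K" "d \<in> K" using fr frK by auto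

  have Pcv: "convex P" unfolding P_def by (rule convex_convex_hull)
  have Pcpt: "compact P" unfolding P_def by (rule finite_imp_compact_convex_hull) simp
  have PK: "P \<subseteq> K" unfolding P_def using inK Kcv by (intro hull_minimal) auto
  have vP: "a \<in> P" "b \<in> P" "c \<in> P" "d \<in> P" unfolding P_def by (auto intro: hull_inc)
  have inP: "a + s *\<^sub>R e + t *\<^sub>R f \<in> P" if "0 \<le> s" "s \<le> 1" "0 \<le> t" "t \<le> 1" for s t
  proof -
    have "(1 - s) *\<^sub>R a + s *\<^sub>R b \<in> P" using that vP by (intro convexD[OF Pcv]) auto
    moreover have "(1 - s) *\<^sub>R d + s *\<^sub>R c \<in> P" using that vP by (intro convexD[OF Pcv]) auto
    ultimately have "(1 - t) *\<^sub>R ((1 - s) *\<^sub>R a + s *\<^sub>R b) + t *\<^sub>R ((1 - s) *\<^sub>R d + s *\<^sub>R c) \<in> P"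
      using that by (rule_tac convexD[OF Pcv]) auto
    also have "(1 - t) *\<^sub>R ((1 - s) *\<^sub>R a + s *\<^sub>R b) + t *\<^sub>R ((1 - s) *\<^sub>R d + s *\<^sub>R c)
        = a + s *\<^sub>R e + t *\<^sub>R f"
      unfolding bE cE dE by (simp add: algebra_simps)
    finally show ?thesis .
  qed
  define Q where "Q = {x. inner (cS e f) a \<le> inner (cS e f) x} \<inter> {x. inner (cS e f) x \<le> 1 + inner (cS e f) a}
     \<inter> {x. inner (cT e f) a \<le> inner (cT e f) x} \<inter> {x. inner (cT e f) x \<le> 1 + inner (cT e f) a}"
  have Qiff: "x \<in> Q \<longleftrightarrow> 0 \<le> ss x \<and> ss x \<le> 1 \<and> 0 \<le> tt x \<and> tt x \<le> 1" for x
    unfolding Q_def ss_def tt_def by (auto simp: inner_diff_right)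
  have Qcv: "convex Q" unfolding Q_def
    by (intro convex_Int convex_halfspace_le convex_halfspace_ge)
  have PQ: "P \<subseteq> Q"
  proof -
    have "a \<in> Q" using coordS[of 0 0] coordT[of 0 0] Qiff by simp
    moreover have "b \<in> Q" using coordS[of 1 0] coordT[of 1 0] Qiff bE by simp
    moreover have "c \<in> Q" using coordS[of 1 1] coordT[of 1 1] Qiff cE by simp
    moreover have "d \<in> Q" using coordS[of 0 1] coordT[of 0 1] Qiff dE by simp
    ultimately show ?thesis unfolding P_def using Qcv by (intro hull_minimal) auto
  qed

  have kr: "\<bar>k\<bar> \<le> r"
  proof -
    define L where "L = (\<lambda>x::real^2. x$1 *\<^sub>R e + x$2 *\<^sub>R f)"
    have "measure lebesgue (L ` cbox 0 1) = \<bar>det (matrix L)\<bar> * measure lebesgue (cbox (0::real^2) 1)"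
      unfolding L_def by (intro measure_lebesgue_linear_transformation linL) auto
    also have "\<dots> = \<bar>k\<bar>" unfolding L_def k_def detL unit_sq by simp
    finally have m1: "measure lebesgue ((+) a ` (L ` cbox 0 1)) = \<bar>k\<bar>" by (simp add: measure_translation)
    have sub: "(+) a ` (L ` cbox 0 1) \<subseteq> P"
    proof
      fix y assume "y \<in> (+) a ` (L ` cbox 0 1)"
      then obtain x :: "real^2" where x: "x \<in> cbox 0 1" "y = a + L x" by blast
      have "0 \<le> x$1" "x$1 \<le> 1" "0 \<le> x$2" "x$2 \<le> 1" using x(1) by (auto simp: mem_box_cart)
      hence "a + x$1 *\<^sub>R e + x$2 *\<^sub>R f \<in> P" by (rule inP)
      thus "y \<in> P" using x(2) unfolding L_def by (simp add: add.assoc)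
    qed
    have "measure lebesgue ((+) a ` (L ` cbox 0 1)) \<le> measure lebesgue P"
    proof (rule measure_mono_fmeasurable[OF sub])
      have "compact (L ` cbox 0 1)" unfolding L_def
        using linL[of e f] by (intro compact_continuous_image linear_continuous_on) (auto simp: linear_conv_bounded_linear)
      hence "compact ((+) a ` (L ` cbox 0 1))" by (intro compact_translation)
      thus "(+) a ` (L ` cbox 0 1) \<in> sets lebesgue" by (intro fmeasurableD lmeasurable_compact)
      show "P \<in> fmeasurable lebesgue" using Pcpt by (rule lmeasurable_compact)
    qed
    thus ?thesis using m1 assms(4) unfolding P_def by simp
  qed
  have kpos: "0 < \<bar>k\<bar>" using kne k_def by simp

  obtain nA where nA: "nA \<noteq> 0" "\<And>y. y \<in> K \<Longrightarrow> inner nA a \<le> inner nA y"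
    by (rule support_pt[OF Kcv Kcl Ki fr(1)]) blast
  obtain nB where nB: "nB \<noteq> 0" "\<And>y. y \<in> K \<Longrightarrow> inner nB b \<le> inner nB y"
    by (rule support_pt[OF Kcv Kcl Ki fr(2)]) blast
  obtain nC where nC: "nC \<noteq> 0" "\<And>y. y \<in> K \<Longrightarrow> inner nC c \<le> inner nC y"
    by (rule support_pt[OF Kcv Kcl Ki fr(3)]) blast
  obtain nD where nD: "nD \<noteq> 0" "\<And>y. y \<in> K \<Longrightarrow> inner nD d \<le> inner nD y"
    by (rule support_pt[OF Kcv Kcl Ki fr(4)]) blast
  define aA where "aA = inner nA e"
  define bA where "bA = inner nA f"
  define aB where "aB = - inner nB e"
  define bB where "bB = inner nB f"
  define aC where "aC = - inner nC e"
  define bC where "bC = - inner nC f"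
  define aD where "aD = inner nD e"
  define bD where "bD = - inner nD f"
  have nn: "0 \<le> aA" "0 \<le> bA" "0 \<le> aB" "0 \<le> bB" "0 \<le> aC" "0 \<le> bC" "0 \<le> aD" "0 \<le> bD"
    using nA(2)[OF inK(2)] nA(2)[OF inK(4)] nB(2)[OF inK(1)] nB(2)[OF inK(3)]
      nC(2)[OF inK(2)] nC(2)[OF inK(4)] nD(2)[OF inK(1)] nD(2)[OF inK(3)]
    unfolding aA_def bA_def aB_def bB_def aC_def bC_def aD_def bD_def bE cE dE
    by (simp_all add: inner_add_right)
  have pp: "0 < aA + bA" "0 < aB + bB" "0 < aC + bC" "0 < aD + bD"
  proof -
    show "0 < aA + bA"
    proof (rule ccontr)
      assume "\<not> 0 < aA + bA"
      hence "inner nA e = 0" "inner nA f = 0" using nn unfolding aA_def bA_def by auto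
      thus False using nonzero_pair[OF nA(1) kne] by blast
    qed
    show "0 < aB + bB"
    proof (rule ccontr)
      assume "\<not> 0 < aB + bB"
      hence "inner nB e = 0" "inner nB f = 0" using nn unfolding aB_def bB_def by auto
      thus False using nonzero_pair[OF nB(1) kne] by blast
    qed
    show "0 < aC + bC"
    proof (rule ccontr)
      assume "\<not> 0 < aC + bC"
      hence "inner nC e = 0" "inner nC f = 0" using nn unfolding aC_def bC_def by auto
      thus False using nonzero_pair[OF nC(1) kne] by blast
    qed
    show "0 < aD + bD"
    proof (rule ccontr)
      assume "\<not> 0 < aD + bD"
      hence "inner nD e = 0" "inner nD f = 0" using nn unfolding aD_def bD_def by auto
      thus False using nonzero_pair[OF nD(1) kne] by blast
    qed
  qed
  have cA: "0 \<le> aA * s + bA * t" if "a + s *\<^sub>R e + t *\<^sub>R f \<in> K" for s t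
  proof -
    have "inner nA a \<le> inner nA (a + s *\<^sub>R e + t *\<^sub>R f)" using nA(2) that by blast
    thus ?thesis by (simp add: inner_add_right aA_def bA_def algebra_simps)
  qed
  have cB: "0 \<le> aB * (1 - s) + bB * t" if "a + s *\<^sub>R e + t *\<^sub>R f \<in> K" for s t
  proof -
    have "inner nB (a + e) \<le> inner nB (a + s *\<^sub>R e + t *\<^sub>R f)" using nB(2) that bE by blast
    thus ?thesis by (simp add: inner_add_right aB_def bB_def algebra_simps)
  qed
  have cC: "0 \<le> aC * (1 - s) + bC * (1 - t)" if "a + s *\<^sub>R e + t *\<^sub>R f \<in> K" for s t
  proof -
    have "inner nC (a + e + f) \<le> inner nC (a + s *\<^sub>R e + t *\<^sub>R f)" using nC(2) that cE by blast
    thus ?thesis by (simp add: inner_add_right aC_def bC_def algebra_simps)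
  qed
  have cD: "0 \<le> aD * s + bD * (1 - t)" if "a + s *\<^sub>R e + t *\<^sub>R f \<in> K" for s t
  proof -
    have "inner nD (a + f) \<le> inner nD (a + s *\<^sub>R e + t *\<^sub>R f)" using nD(2) that dE by blast
    thus ?thesis by (simp add: inner_add_right aD_def bD_def algebra_simps)
  qed

  define R1 where "R1 = interior K \<inter> {x. tt x < 0}"
  define R2 where "R2 = interior K \<inter> {x. 1 < ss x}"
  define R3 where "R3 = interior K \<inter> {x. 1 < tt x}"
  define R4 where "R4 = interior K \<inter> {x. ss x < 0}"
  have H1: "{x. tt x < 0} = {x. inner (cT e f) x < inner (cT e f) a}"
    by (auto simp: tt_def inner_diff_right)
  have H2: "{x. 1 < ss x} = {x. inner (cS e f) x > 1 + inner (cS e f) a}"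
    by (auto simp: ss_def inner_diff_right)
  have H3: "{x. 1 < tt x} = {x. inner (cT e f) x > 1 + inner (cT e f) a}"
    by (auto simp: tt_def inner_diff_right)
  have H4: "{x. ss x < 0} = {x. inner (cS e f) x < inner (cS e f) a}"
    by (auto simp: ss_def inner_diff_right)
  have Ropen: "open R1" "open R2" "open R3" "open R4"
    unfolding R1_def R2_def R3_def R4_def H1 H2 H3 H4
    by (intro open_Int open_interior open_halfspace_lt open_halfspace_gt)+
  have Rconv: "convex R1" "convex R2" "convex R3" "convex R4"
    unfolding R1_def R2_def R3_def R4_def H1 H2 H3 H4
    by (intro convex_Int convex_interior[OF Kcv] convex_halfspace_lt convex_halfspace_gt)+
  have RK: "R1 \<subseteq> K" "R2 \<subseteq> K" "R3 \<subseteq> K" "R4 \<subseteq> K"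
    unfolding R1_def R2_def R3_def R4_def using interior_subset by blast+
  have Kb: "bounded K" using Kc by (rule compact_imp_bounded)
  have Rm: "R1 \<in> sets lebesgue" "R2 \<in> sets lebesgue" "R3 \<in> sets lebesgue" "R4 \<in> sets lebesgue"
    using Ropen RK bounded_subset[OF Kb] by (auto intro!: fmeasurableD lmeasurable_open)
  have RP: "R1 \<subseteq> interior K - P" "R2 \<subseteq> interior K - P" "R3 \<subseteq> interior K - P" "R4 \<subseteq> interior K - P"
    unfolding R1_def R2_def R3_def R4_def using PQ Qiff by fastforce+

  have cons1: "0 \<le> aA * s + bA * t \<and> 0 \<le> aB * (1 - s) + bB * t"
    if "a + s *\<^sub>R e + t *\<^sub>R f \<in> K" for s t using cA[OF that] cB[OF that] by blast
  have rep1: "\<exists>s t. x = a + s *\<^sub>R e + t *\<^sub>R f \<and> t < 0" if "x \<in> R1" for x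
    using that decomp unfolding R1_def by blast
  have cons2: "0 \<le> bB * s + aB * t \<and> 0 \<le> bC * (1 - s) + aC * t"
    if "b + s *\<^sub>R f + t *\<^sub>R (- e) \<in> K" for s t
  proof -
    have eq: "b + s *\<^sub>R f + t *\<^sub>R (- e) = a + (1 - t) *\<^sub>R e + s *\<^sub>R f" by (simp add: bE algebra_simps)
    have h: "a + (1 - t) *\<^sub>R e + s *\<^sub>R f \<in> K" using that by (simp only: eq)
    show ?thesis using cB[OF h] cC[OF h] by (simp add: algebra_simps)
  qed
  have rep2: "\<exists>s t. x = b + s *\<^sub>R f + t *\<^sub>R (- e) \<and> t < 0" if "x \<in> R2" for x
  proof -
    have eq: "b + tt x *\<^sub>R f + (1 - ss x) *\<^sub>R (- e) = a + ss x *\<^sub>R e + tt x *\<^sub>R f"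
      by (simp add: bE algebra_simps)
    have "x = b + tt x *\<^sub>R f + (1 - ss x) *\<^sub>R (- e)" by (subst eq) (rule decomp)
    moreover have "1 - ss x < 0" using that unfolding R2_def by simp
    ultimately show ?thesis by blast
  qed
  have cons3: "0 \<le> aC * s + bC * t \<and> 0 \<le> aD * (1 - s) + bD * t"
    if "c + s *\<^sub>R (- e) + t *\<^sub>R (- f) \<in> K" for s t
  proof -
    have eq: "c + s *\<^sub>R (- e) + t *\<^sub>R (- f) = a + (1 - s) *\<^sub>R e + (1 - t) *\<^sub>R f" by (simp add: cE algebra_simps)
    have h: "a + (1 - s) *\<^sub>R e + (1 - t) *\<^sub>R f \<in> K" using that by (simp only: eq)
    show ?thesis using cC[OF h] cD[OF h] by (simp add: algebra_simps)
  qed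
  have rep3: "\<exists>s t. x = c + s *\<^sub>R (- e) + t *\<^sub>R (- f) \<and> t < 0" if "x \<in> R3" for x
  proof -
    have eq: "c + (1 - ss x) *\<^sub>R (- e) + (1 - tt x) *\<^sub>R (- f) = a + ss x *\<^sub>R e + tt x *\<^sub>R f"
      by (simp add: cE algebra_simps)
    have "x = c + (1 - ss x) *\<^sub>R (- e) + (1 - tt x) *\<^sub>R (- f)" by (subst eq) (rule decomp)
    moreover have "1 - tt x < 0" using that unfolding R3_def by simp
    ultimately show ?thesis by blast
  qed
  have cons4: "0 \<le> bD * s + aD * t \<and> 0 \<le> bA * (1 - s) + aA * t"
    if "d + s *\<^sub>R (- f) + t *\<^sub>R e \<in> K" for s t
  proof -
    have eq: "d + s *\<^sub>R (- f) + t *\<^sub>R e = a + t *\<^sub>R e + (1 - s) *\<^sub>R f" by (simp add: dE algebra_simps)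
    have h: "a + t *\<^sub>R e + (1 - s) *\<^sub>R f \<in> K" using that by (simp only: eq)
    show ?thesis using cD[OF h] cA[OF h] by (simp add: algebra_simps)
  qed
  have rep4: "\<exists>s t. x = d + s *\<^sub>R (- f) + t *\<^sub>R e \<and> t < 0" if "x \<in> R4" for x
  proof -
    have eq: "d + (1 - tt x) *\<^sub>R (- f) + ss x *\<^sub>R e = a + ss x *\<^sub>R e + tt x *\<^sub>R f"
      by (simp add: dE algebra_simps)
    have "x = d + (1 - tt x) *\<^sub>R (- f) + ss x *\<^sub>R e" by (subst eq) (rule decomp)
    moreover have "ss x < 0" using that unfolding R4_def by simp
    ultimately show ?thesis by blast
  qed
  have crs: "cr f (- e) = k" "cr (- e) (- f) = k" "cr (- f) e = k"
    unfolding k_def by (simp_all add: cr_def algebra_simps)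
  define m1 where "m1 = measure lebesgue R1"
  define m2 where "m2 = measure lebesgue R2"
  define m3 where "m3 = measure lebesgue R3"
  define m4 where "m4 = measure lebesgue R4"
  have B1: "(aA * bB + bA * aB) * m1 \<le> \<bar>k\<bar> * (aA * aB) / 2"
    unfolding m1_def k_def
    by (rule cap_bound[OF nn(1,2,3,4) pp(1,2) cons1 RK(1) Rm(1) rep1])
  have B2: "(bB * aC + aB * bC) * m2 \<le> \<bar>k\<bar> * (bB * bC) / 2"
    unfolding m2_def crs(1)[symmetric]
    by (rule cap_bound[OF nn(4,3,6,5) _ _ cons2 RK(2) Rm(2) rep2]) (use pp in \<open>simp_all add: add.commute\<close>)
  have B3: "(aC * bD + bC * aD) * m3 \<le> \<bar>k\<bar> * (aC * aD) / 2"
    unfolding m3_def crs(2)[symmetric]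
    by (rule cap_bound[OF nn(5,6,7,8) pp(3,4) cons3 RK(3) Rm(3) rep3])
  have B4: "(bD * aA + aD * bA) * m4 \<le> \<bar>k\<bar> * (bD * bA) / 2"
    unfolding m4_def crs(3)[symmetric]
    by (rule cap_bound[OF nn(8,7,2,1) _ _ cons4 RK(4) Rm(4) rep4]) (use pp in \<open>simp_all add: add.commute\<close>)
  have scale: "D * (2 * m / \<bar>k\<bar>) \<le> N" if "D * m \<le> \<bar>k\<bar> * N / 2" for D m N :: real
  proof -
    have "D * (2 * m / \<bar>k\<bar>) = 2 * (D * m) / \<bar>k\<bar>" by simp
    also have "\<dots> \<le> 2 * (\<bar>k\<bar> * N / 2) / \<bar>k\<bar>" using that kpos by (intro divide_right_mono mult_left_mono) auto
    also have "\<dots> = N" using kpos by simp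
    finally show ?thesis .
  qed
  have mnn: "0 \<le> m1" "0 \<le> m2" "0 \<le> m3" "0 \<le> m4" by (simp_all add: m1_def m2_def m3_def m4_def)
  have mmn: "0 \<le> 2 * m1 / \<bar>k\<bar>" "0 \<le> 2 * m2 / \<bar>k\<bar>" "0 \<le> 2 * m3 / \<bar>k\<bar>" "0 \<le> 2 * m4 / \<bar>k\<bar>"
    using mnn by simp_all
  have pp': "0 < bB + aB" "0 < bC + aC" "0 < bD + aD" "0 < bA + aA" using pp by (simp_all add: add.commute)
  have K1: "2 * m1 / \<bar>k\<bar> = 0" if "aA = 0"
    using cap_empty1[OF nn(2) pp(1) that cons1[THEN conjunct1] RK(1) rep1] by (simp add: m1_def)
  have K2: "2 * m1 / \<bar>k\<bar> = 0" if "aB = 0"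
    using cap_empty2[OF nn(4) pp(2) that cons1[THEN conjunct2] RK(1) rep1] by (simp add: m1_def)
  have K3: "2 * m3 / \<bar>k\<bar> = 0" if "aC = 0"
    using cap_empty1[OF nn(6) pp(3) that cons3[THEN conjunct1] RK(3) rep3] by (simp add: m3_def)
  have K4: "2 * m3 / \<bar>k\<bar> = 0" if "aD = 0"
    using cap_empty2[OF nn(8) pp(4) that cons3[THEN conjunct2] RK(3) rep3] by (simp add: m3_def)
  have K5: "2 * m2 / \<bar>k\<bar> = 0" if "bB = 0"
    using cap_empty1[OF nn(3) pp'(1) that cons2[THEN conjunct1] RK(2) rep2] by (simp add: m2_def)
  have K6: "2 * m2 / \<bar>k\<bar> = 0" if "bC = 0"
    using cap_empty2[OF nn(5) pp'(2) that cons2[THEN conjunct2] RK(2) rep2] by (simp add: m2_def)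
  have K7: "2 * m4 / \<bar>k\<bar> = 0" if "bD = 0"
    using cap_empty1[OF nn(7) pp'(3) that cons4[THEN conjunct1] RK(4) rep4] by (simp add: m4_def)
  have K8: "2 * m4 / \<bar>k\<bar> = 0" if "bA = 0"
    using cap_empty2[OF nn(1) pp'(4) that cons4[THEN conjunct2] RK(4) rep4] by (simp add: m4_def)
  have PA: "(2 * m1 / \<bar>k\<bar> + 2 * m3 / \<bar>k\<bar>) * (2 * m2 / \<bar>k\<bar> + 2 * m4 / \<bar>k\<bar>) \<le> 1"
    by (rule prod_alg[OF nn mmn scale[OF B1] scale[OF B2] scale[OF B3] scale[OF B4] K1 K2 K3 K4 K5 K6 K7 K8])
  have prodb: "(m1 + m3) * (m2 + m4) \<le> r^2 / 4"
  proof -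
    have "(m1 + m3) * (m2 + m4)
        = (\<bar>k\<bar>^2 / 4) * ((2 * m1 / \<bar>k\<bar> + 2 * m3 / \<bar>k\<bar>) * (2 * m2 / \<bar>k\<bar> + 2 * m4 / \<bar>k\<bar>))"
      using kpos by (simp add: field_simps power2_eq_square)
    also have "\<dots> \<le> (\<bar>k\<bar>^2 / 4) * 1" using PA by (intro mult_left_mono) auto
    also have "\<dots> \<le> r^2 / 4"
    proof -
      have "\<bar>k\<bar>^2 \<le> r^2" using power_mono[OF kr, of 2] by simp
      thus ?thesis by simp
    qed
    finally show ?thesis .
  qed

  have Rf: "R1 \<in> lmeasurable" "R2 \<in> lmeasurable" "R3 \<in> lmeasurable" "R4 \<in> lmeasurable"
    using Ropen RK bounded_subset[OF Kb] by (auto intro!: lmeasurable_open)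
  have intKf: "interior K \<in> lmeasurable" using Kb by (rule lmeasurable_interior)
  have frKf: "frontier K \<in> lmeasurable" using Kc by (intro lmeasurable_compact compact_frontier)
  have Pf: "P \<in> lmeasurable" using Pcpt by (rule lmeasurable_compact)
  have Keq: "K = interior K \<union> frontier K"
    using Kcl interior_subset closure_subset by (auto simp: frontier_def closure_closed)
  have "1 = measure lebesgue (interior K \<union> frontier K)" using assms(2) Keq by simp
  also have "\<dots> \<le> measure lebesgue (interior K) + measure lebesgue (frontier K)"
    using intKf frKf by (intro measure_Un_le) (auto intro: fmeasurableD)
  also have "measure lebesgue (frontier K) = 0"
    by (rule negligible_imp_measure0[OF negligible_convex_frontier[OF Kcv]])
  finally have I1: "1 \<le> measure lebesgue (interior K)" by simp
  have dKf: "interior K - P \<in> lmeasurable" using intKf Pf by (intro fmeasurable_Diff) (auto intro: fmeasurableD)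
  have "measure lebesgue (interior K) \<le> measure lebesgue ((interior K - P) \<union> P)"
    using intKf dKf Pf by (intro measure_mono_fmeasurable) (auto intro: fmeasurableD fmeasurable.Un)
  also have "\<dots> \<le> measure lebesgue (interior K - P) + measure lebesgue P"
    using dKf Pf by (intro measure_Un_le) (auto intro: fmeasurableD)
  finally have I2: "measure lebesgue (interior K) \<le> measure lebesgue (interior K - P) + r"
    using assms(4) P_def by simp
  have cover: "interior K - P \<subseteq> R1 \<union> R2 \<union> R3 \<union> R4"
  proof
    fix x assume x: "x \<in> interior K - P"
    show "x \<in> R1 \<union> R2 \<union> R3 \<union> R4"
    proof (rule ccontr)
      assume "x \<notin> R1 \<union> R2 \<union> R3 \<union> R4"
      hence "0 \<le> ss x" "ss x \<le> 1" "0 \<le> tt x" "tt x \<le> 1"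
        using x unfolding R1_def R2_def R3_def R4_def by auto
      hence "a + ss x *\<^sub>R e + tt x *\<^sub>R f \<in> P" by (rule inP)
      hence "x \<in> P" using decomp[of x] by simp
      thus False using x by blast
    qed
  qed
  have U12: "R1 \<union> R2 \<in> lmeasurable" using Rf by (intro fmeasurable.Un)
  have U123: "R1 \<union> R2 \<union> R3 \<in> lmeasurable" using Rf U12 by (intro fmeasurable.Un)
  have U: "R1 \<union> R2 \<union> R3 \<union> R4 \<in> lmeasurable" using Rf U123 by (intro fmeasurable.Un)
  have "measure lebesgue (interior K - P) \<le> measure lebesgue (R1 \<union> R2 \<union> R3 \<union> R4)"
    using cover dKf U by (intro measure_mono_fmeasurable) (auto intro: fmeasurableD)
  also have "\<dots> \<le> measure lebesgue (R1 \<union> R2 \<union> R3) + m4"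
    unfolding m4_def using U123 Rf by (intro measure_Un_le) (auto intro: fmeasurableD)
  also have "measure lebesgue (R1 \<union> R2 \<union> R3) \<le> measure lebesgue (R1 \<union> R2) + m3"
    unfolding m3_def using U12 Rf by (intro measure_Un_le) (auto intro: fmeasurableD)
  also have "measure lebesgue (R1 \<union> R2) \<le> m1 + m2"
    unfolding m1_def m2_def using Rf by (intro measure_Un_le) (auto intro: fmeasurableD)
  finally have tot: "1 - r \<le> m1 + m2 + m3 + m4" using I1 I2 by linarith

  have fa: "(sqrt (1 - 2 * r) + 1 - r) / 4 \<le> max (max m1 m3) (max m2 m4)"
    by (rule final_alg[OF mnn assms(5) tot prodb])
  have bpos: "0 < (sqrt (1 - 2 * r) + 1 - r) / 4"
  proof -
    have "0 \<le> sqrt (1 - 2 * r)" using assms(5) by simp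
    hence "0 < sqrt (1 - 2 * r) + 1 - r" using assms(5) by linarith
    thus ?thesis by simp
  qed
  have pick: "\<exists>C \<in> caps K P. (sqrt (1 - 2 * r) + 1 - r) / 4 \<le> measure lebesgue C"
    if "R \<subseteq> interior K - P" "convex R" "R \<in> sets lebesgue"
       "(sqrt (1 - 2 * r) + 1 - r) / 4 \<le> measure lebesgue R" for R
  proof -
    have "R \<noteq> {}" using that(4) bpos by auto
    from cap_from_region[OF Kc that(1) that(2) this that(3)] obtain C where
      "C \<in> closure ` components (interior K - P)" "measure lebesgue R \<le> measure lebesgue C" by blast
    thus ?thesis using that(4) unfolding caps_def by force
  qed
  have "\<exists>C \<in> caps K P. (sqrt (1 - 2 * r) + 1 - r) / 4 \<le> measure lebesgue C"
  proof -
    consider "(sqrt (1 - 2 * r) + 1 - r) / 4 \<le> m1" | "(sqrt (1 - 2 * r) + 1 - r) / 4 \<le> m2"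
      | "(sqrt (1 - 2 * r) + 1 - r) / 4 \<le> m3" | "(sqrt (1 - 2 * r) + 1 - r) / 4 \<le> m4"
      using fa by (auto simp: max_def split: if_splits)
    thus ?thesis
    proof cases
      case 1 thus ?thesis using pick[OF RP(1) Rconv(1) Rm(1)] m1_def by blast
    next
      case 2 thus ?thesis using pick[OF RP(2) Rconv(2) Rm(2)] m2_def by blast
    next
      case 3 thus ?thesis using pick[OF RP(3) Rconv(3) Rm(3)] m3_def by blast
    next
      case 4 thus ?thesis using pick[OF RP(4) Rconv(4) Rm(4)] m4_def by blast
    qed
  qed
  thus ?thesis unfolding P_def by simp
qed


end
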